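(* Let a power network have node set $V$, initial active link set $\mathcal{E}^0$, link weights $w\in\mathbb{R}_{\ge0}^{\mathcal{E}^0}$, link capacities $c\in\mathbb{R}_{\ge0}^{\mathcal{E}^0}$, initial balanced supply-demand vector $p^0\in\mathcal{B}_{\mathcal{E}^0}$ and horizon $N\ge1$. Then for every $\epsilon>0$ there exists a feasible control sequence $\tilde u=(\tilde u^0,\dots,\tilde u^{N-1})\in\mathcal{D}(\mathcal{E}^0,p^0,N)$ such that $$\mathbb{J}_N(\mathcal{E}^0,\{p^0\})\ \ge\ s^\top\tilde u^{N-1}\ \ge\ \mathbb{J}_N(\mathcal{E}^0,\{p^0\})-\epsilon.$$
   Context: Network model. The network is a finite undirected multigraph with node set $V$ and link set $\mathcal{E}^0$ (arbitrary reference orientation of links). For $\mathcal{E}\subseteq\mathcal{E}^0$, let $A$ be the node–link incidence matrix of $(V,\mathcal{E})$, $W=\mathrm{diag}(w_i)_{i\in\mathcal{E}}$, $L(\mathcal{E})=AWA^\top$ with pseudo-inverse $L^\dagger(\mathcal{E})$. $\mathcal{B}_{\mathcal{E}}=\{u\in\mathbb{R}^V:\sum_{v\in V^{(i)}}u_v=0$ for every connected component $V^{(i)}$ of $(V,\mathcal{E})\}$. For $p\in\mathcal{B}_{\mathcal{E}}$, $f(\mathcal{E},p)=WA^\top L^\dagger(\mathcal{E})p$. $s\in\{1,0,-1\}^V$ equals $1$ on supply nodes, $-1$ on demand nodes, $0$ on other nodes. $\mathrm{sign}(x)=1$ if $x\ge0$, $-1$ otherwise; $\mathrm{cube}(p)=\{u\in\mathbb{R}^V:0\le\mathrm{sign}(p_v)u_v\le|p_v|\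 \forall v\}$, $\mathrm{cube}(P)=\bigcup_{p\in P}\mathrm{cube}(p)$; $U(\mathcal{E},p)=\mathrm{cube}(p)\cap\mathcal{B}_{\mathcal{E}}$, $U(\mathcal{E},P)=\mathcal{B}_{\mathcal{E}}\cap\mathrm{cube}(P)$. $\mathcal{F}_{\mathcal{E}}(\mathcal{E},u)=\{i\in\mathcal{E}:|f_i(\mathcal{E},u)|\le c_i\}$. Feasible states: $\mathcal{S}=\{(\mathcal{E},p):p\in\mathcal{B}_{\mathcal{E}},|f_i(\mathcal{E},p)|\le c_i\ \forall i\in\mathcal{E}\}$. Controlled cascade: $\mathcal{E}^{t+1}=\mathcal{F}_{\mathcal{E}}(\mathcal{E}^t,u^t)$, $p^{t+1}=u^t$, $u^t\in U(\mathcal{E}^t,p^t)$. $\mathcal{D}(\mathcal{E}^0,p^0,N)$ is the set of sequences $(u^0,\dots,u^{N-1})$ with $u^t\in U(\mathcal{E}^t,p^t)$ for $t=0,\dots,N-1$ and $(\mathcal{E}^{N-1},u^{N-1})\in\mathcal{S}$, where $(\mathcal{E}^t,p^t)$ are generated by the cascade. Aggregation: for $\beta\in\{-1,0,1\}^{\mathcal{E}}$, $U(\mathcal{E},P,\beta)=\{u\in U(\mathcal{E},P): f_i(\mathcal{E},u)<-c_i$ if $\beta_i=-1$; $|f_i(\mathcal{E},u)|\le c_i$ if $\beta_i=0$; $f_i(\mathcal{E},u)>c_i$ if $\beta_i=1\}$; $\mathbb{U}(\mathcal{E},P)$ is the collection of nonempty $U(\mathcal{E},P,\beta)$. $\mathcal{F}_{\mathcal{E}}(\mathcal{E},U)=\{i\in\mathcal{E}:|f_i(\mathcal{E},u)|\le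 c_i\ \forall u\in U\}$. $\mathbb{J}_1(\mathcal{E},P)=\max\{s^\top u:u\in U(\mathcal{E},\mathrm{cl}\,P),\ |f_i(\mathcal{E},u)|\le c_i\ \forall i\in\mathcal{E}\}$ and $\mathbb{J}_{t+1}(\mathcal{E},P)=\max_{U\in\mathbb{U}(\mathcal{E},P)}\mathbb{J}_t(\mathcal{F}_{\mathcal{E}}(\mathcal{E},U),U)$ for $t\in\{1,\dots,N-1\}$. *)

theory Defs
  imports "HOL-Analysis.Analysis"
begin

text \<open>Vectors in R^V are functions
  'v => real (taken to vanish outside V where they represent elements of B_E).\<close>

record ('v, 'e) net =
  nodes  :: "'v set"
  tail   :: "'e \<Rightarrow> 'v"
  head   :: "'e \<Rightarrow> 'v"
  weight :: "'e \<Rightarrow> real"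
  cap    :: "'e \<Rightarrow> real"

definition inc :: "('v, 'e) net \<Rightarrow> 'v \<Rightarrow> 'e \<Rightarrow> real" where
  "inc G v i = (if v = tail G i then 1 else 0) - (if v = head G i then 1 else 0)"

definition lap :: "('v, 'e) net \<Rightarrow> 'e set \<Rightarrow> 'v \<Rightarrow> 'v \<Rightarrow> real" where
  "lap G E u v = (\<Sum>i\<in>E. inc G u i * weight G i * inc G v i)"

definition mmul :: "'v set \<Rightarrow> ('v \<Rightarrow> 'v \<Rightarrow> real) \<Rightarrow> ('v \<Rightarrow> 'v \<Rightarrow> real) \<Rightarrow> 'v \<Rightarrow> 'v \<Rightarrow> real" where
  "mmul V X Y = (\<lambda>u v. \<Sum>k\<in>V. X u k * Y k v)"

definition is_pinv :: "'v set \<Rightarrow> ('v \<Rightarrow> 'v \<Rightarrow> real) \<Rightarrow> ('v \<Rightarrow> 'v \<Rightarrow> real) \<Rightarrow> bool" where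
  "is_pinv V L X \<longleftrightarrow>
     (\<forall>u v. u \<notin> V \<or> v \<notin> V \<longrightarrow> X u v = 0) \<and>
     (\<forall>u\<in>V. \<forall>v\<in>V.
        mmul V (mmul V L X) L u v = L u v \<and>
        mmul V (mmul V X L) X u v = X u v \<and>
        mmul V L X u v = mmul V L X v u \<and>
        mmul V X L u v = mmul V X L v u)"

definition pinv :: "'v set \<Rightarrow> ('v \<Rightarrow> 'v \<Rightarrow> real) \<Rightarrow> 'v \<Rightarrow> 'v \<Rightarrow> real" where
  "pinv V L = (THE X. is_pinv V L X)"

definition flow :: "('v, 'e) net \<Rightarrow> 'e set \<Rightarrow> ('v \<Rightarrow> real) \<Rightarrow> 'e \<Rightarrow> real" where
  "flow G E p i = weight G i *
     (\<Sum>v\<in>nodes G. inc G v i * (\<Sum>x\<in>nodes G. pinv (nodes G) (lap G E) v x * p x))"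

definition adj :: "('v, 'e) net \<Rightarrow> 'e set \<Rightarrow> ('v \<times> 'v) set" where
  "adj G E = {(tail G i, head G i) | i. i \<in> E} \<union> {(head G i, tail G i) | i. i \<in> E}"

definition comp :: "('v, 'e) net \<Rightarrow> 'e set \<Rightarrow> 'v \<Rightarrow> 'v set" where
  "comp G E v = {x \<in> nodes G. (v, x) \<in> (adj G E)\<^sup>*}"

definition balanced :: "('v, 'e) net \<Rightarrow> 'e set \<Rightarrow> ('v \<Rightarrow> real) set" where
  "balanced G E = {u. (\<forall>x. x \<notin> nodes G \<longrightarrow> u x = 0) \<and>
                       (\<forall>v\<in>nodes G. (\<Sum>x\<in>comp G E v. u x) = 0)}"

definition sgn' :: "real \<Rightarrow> real" where
  "sgn' x = (if x \<ge> 0 then 1 else -1)"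

definition cube :: "('v, 'e) net \<Rightarrow> ('v \<Rightarrow> real) \<Rightarrow> ('v \<Rightarrow> real) set" where
  "cube G p = {u. \<forall>v\<in>nodes G. 0 \<le> sgn' (p v) * u v \<and> sgn' (p v) * u v \<le> \<bar>p v\<bar>}"

definition cubeS :: "('v, 'e) net \<Rightarrow> ('v \<Rightarrow> real) set \<Rightarrow> ('v \<Rightarrow> real) set" where
  "cubeS G P = (\<Union>p\<in>P. cube G p)"

definition Uctl :: "('v, 'e) net \<Rightarrow> 'e set \<Rightarrow> ('v \<Rightarrow> real) \<Rightarrow> ('v \<Rightarrow> real) set" where
  "Uctl G E p = cube G p \<inter> balanced G E"

definition UctlS :: "('v, 'e) net \<Rightarrow> 'e set \<Rightarrow> ('v \<Rightarrow> real) set \<Rightarrow> ('v \<Rightarrow> real) set" where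
  "UctlS G E P = balanced G E \<inter> cubeS G P"

definition FE :: "('v, 'e) net \<Rightarrow> 'e set \<Rightarrow> ('v \<Rightarrow> real) \<Rightarrow> 'e set" where
  "FE G E u = {i \<in> E. \<bar>flow G E u i\<bar> \<le> cap G i}"

definition feasible :: "('v, 'e) net \<Rightarrow> 'e set \<Rightarrow> ('v \<Rightarrow> real) \<Rightarrow> bool" where
  "feasible G E p \<longleftrightarrow> p \<in> balanced G E \<and> (\<forall>i\<in>E. \<bar>flow G E p i\<bar> \<le> cap G i)"

primrec casc :: "('v, 'e) net \<Rightarrow> 'e set \<Rightarrow> ('v \<Rightarrow> real) \<Rightarrow> (nat \<Rightarrow> 'v \<Rightarrow> real)
                  \<Rightarrow> nat \<Rightarrow> 'e set \<times> ('v \<Rightarrow> real)" where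
  "casc G E0 p0 u 0 = (E0, p0)"
| "casc G E0 p0 u (Suc t) = (FE G (fst (casc G E0 p0 u t)) (u t), u t)"

text \<open>Feasible control sequences D(E0,p0,N) (only u 0 .. u (N-1) matter).\<close>
definition Dctl :: "('v, 'e) net \<Rightarrow> 'e set \<Rightarrow> ('v \<Rightarrow> real) \<Rightarrow> nat \<Rightarrow> (nat \<Rightarrow> 'v \<Rightarrow> real) set" where
  "Dctl G E0 p0 N = {u. (\<forall>t<N. u t \<in> Uctl G (fst (casc G E0 p0 u t)) (snd (casc G E0 p0 u t))) \<and>
                        feasible G (fst (casc G E0 p0 u (N - 1))) (u (N - 1))}"

definition UB :: "('v, 'e) net \<Rightarrow> 'e set \<Rightarrow> ('v \<Rightarrow> real) set \<Rightarrow> ('e \<Rightarrow> int) \<Rightarrow> ('v \<Rightarrow> real) set" where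
  "UB G E P \<beta> = {u \<in> UctlS G E P. \<forall>i\<in>E.
       (\<beta> i = -1 \<longrightarrow> flow G E u i < - cap G i) \<and>
       (\<beta> i = 0 \<longrightarrow> \<bar>flow G E u i\<bar> \<le> cap G i) \<and>
       (\<beta> i = 1 \<longrightarrow> flow G E u i > cap G i)}"

definition UU :: "('v, 'e) net \<Rightarrow> 'e set \<Rightarrow> ('v \<Rightarrow> real) set \<Rightarrow> ('v \<Rightarrow> real) set set" where
  "UU G E P = {UB G E P \<beta> | \<beta>. (\<forall>i\<in>E. \<beta> i \<in> {-1, 0, 1}) \<and> UB G E P \<beta> \<noteq> {}}"

definition FEU :: "('v, 'e) net \<Rightarrow> 'e set \<Rightarrow> ('v \<Rightarrow> real) set \<Rightarrow> 'e set" where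
  "FEU G E U = {i \<in> E. \<forall>u\<in>U. \<bar>flow G E u i\<bar> \<le> cap G i}"

definition sdot :: "('v, 'e) net \<Rightarrow> ('v \<Rightarrow> real) \<Rightarrow> ('v \<Rightarrow> real) \<Rightarrow> real" where
  "sdot G s u = (\<Sum>v\<in>nodes G. s v * u v)"

definition J1 :: "('v, 'e) net \<Rightarrow> ('v \<Rightarrow> real) \<Rightarrow> 'e set \<Rightarrow> ('v \<Rightarrow> real) set \<Rightarrow> real" where
  "J1 G s E P = Sup (sdot G s ` {u \<in> UctlS G E (closure P). \<forall>i\<in>E. \<bar>flow G E u i\<bar> \<le> cap G i})"

text \<open>JJ G s t E P = J_t(E,P) for t \<ge> 1 (the value at t = 0 is unused).\<close>
fun JJ :: "('v, 'e) net \<Rightarrow> ('v \<Rightarrow> real) \<Rightarrow> nat \<Rightarrow> 'e set \<Rightarrow> ('v \<Rightarrow> real) set \<Rightarrow> real" where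
  "JJ G s 0 E P = 0"
| "JJ G s (Suc 0) E P = J1 G s E P"
| "JJ G s (Suc (Suc t)) E P = Max ((\<lambda>U. JJ G s (Suc t) (FEU G E U) U) ` UU G E P)"

end

theory Submission
  imports Defs
begin

lemma flow_scale: "flow G E (\<lambda>v. l * u v) i = l * flow G E u i"
  unfolding flow_def
  by (simp add: sum_distrib_left sum_distrib_right algebra_simps)

lemma sdot_scale: "sdot G s (\<lambda>v. l * u v) = l * sdot G s u"
  unfolding sdot_def by (simp add: sum_distrib_left algebra_simps)

lemma balanced_scale: "u \<in> balanced G E \<Longrightarrow> (\<lambda>v. l * u v) \<in> balanced G E"
  unfolding balanced_def by (simp add: sum_distrib_left[symmetric])

lemma cube_abs: "u \<in> cube G q \<Longrightarrow> v \<in> nodes G \<Longrightarrow> \<bar>u v\<bar> \<le> \<bar>q v\<bar>"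
  unfolding cube_def sgn'_def by (auto split: if_splits)

lemma coord_approx:
  fixes a b x l :: real
  assumes "0 \<le> sgn' a * x" "sgn' a * x \<le> \<bar>a\<bar>" "0 < l" "l < 1"
    "\<bar>b - a\<bar> < (if a = 0 then 1 else (1 - l) * \<bar>a\<bar>)"
  shows "0 \<le> sgn' b * (l * x) \<and> sgn' b * (l * x) \<le> \<bar>b\<bar>"
proof (cases "a = 0")
  case True
  then have "x = 0" using assms by (simp add: sgn'_def)
  then show ?thesis by simp
next
  case False
  show ?thesis
  proof (cases "a > 0")
    case True
    then have x: "0 \<le> x" "x \<le> a" using assms by (auto simp: sgn'_def)
    have "b > l * a" using assms True False by (auto simp: algebra_simps)
    moreover have "l * x \<le> l * a" using x assms by (intro mult_left_mono) auto
    moreover have "l * a > 0" using True assms by simp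
    ultimately have h: "l * x \<le> b" "b > 0" by linarith+
    have "0 \<le> l * x" using x assms by simp
    with h show ?thesis by (auto simp: sgn'_def)
  next
    case nb: False
    then have a: "a < 0" using False by simp
    then have x: "0 \<le> -x" "-x \<le> -a" using assms by (auto simp: sgn'_def)
    have "b < l * a" using assms a by (auto simp: algebra_simps)
    moreover have "l * (-x) \<le> l * (-a)" using x assms by (intro mult_left_mono) auto
    moreover have "l * a < 0" using a assms by (simp add: mult_pos_neg)
    ultimately have h: "- (l * x) \<le> - b" "b < 0" by linarith+
    have "0 \<le> - (l * x)" using x assms by (simp add: mult_nonneg_nonpos)
    with h show ?thesis by (auto simp: sgn'_def)
  qed
qed

lemma casc_shift:
  "casc G E q w (Suc k) = casc G (FE G E (w 0)) (w 0) (\<lambda>j. w (Suc j)) k"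
  by (induction k) auto

lemma closed_box: "closed {q :: 'v \<Rightarrow> real. \<forall>v\<in>V. \<bar>q v\<bar> \<le> b v}"
proof -
  have "{q :: 'v \<Rightarrow> real. \<forall>v\<in>V. \<bar>q v\<bar> \<le> b v} = (\<Inter>v\<in>V. {q. \<bar>q v\<bar> \<le> b v})" by auto
  moreover have "closed {q :: 'v \<Rightarrow> real. \<bar>q v\<bar> \<le> b v}" for v
    by (intro closed_Collect_le continuous_intros continuous_on_product_coordinates)
  ultimately show ?thesis by (simp add: closed_INT)
qed

lemma open_box: "finite V \<Longrightarrow> open {f :: 'v \<Rightarrow> real. \<forall>v\<in>V. \<bar>f v - q v\<bar> < r v}"
proof -
  assume "finite V"
  have "{f :: 'v \<Rightarrow> real. \<forall>v\<in>V. \<bar>f v - q v\<bar> < r v} = (\<Inter>v\<in>V. {f. \<bar>f v - q v\<bar> < r v})" by auto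
  moreover have "open {f :: 'v \<Rightarrow> real. \<bar>f v - q v\<bar> < r v}" for v
    by (intro open_Collect_less continuous_intros continuous_on_product_coordinates)
  ultimately show ?thesis using \<open>finite V\<close> by (simp add: open_INT)
qed

lemma base:
  fixes G :: "('v, 'e) net"
  assumes fin: "finite (nodes G)" and Pne: "P \<noteq> {}"
    and bnd: "\<forall>q\<in>P. \<forall>v\<in>nodes G. \<bar>q v\<bar> \<le> b v" and eps: "\<epsilon> > 0"
    and capnn: "\<forall>i\<in>E. cap G i \<ge> 0"
  shows "\<exists>q\<in>P. \<exists>w\<in>Dctl G E q (Suc 0). JJ G s (Suc 0) E P \<ge> sdot G s (w 0) \<and>
           sdot G s (w 0) \<ge> JJ G s (Suc 0) E P - \<epsilon>"
proof -
  define F where "F = {u \<in> UctlS G E (closure P). \<forall>i\<in>E. \<bar>flow G E u i\<bar> \<le> cap G i}"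
  have JJeq: "JJ G s (Suc 0) E P = Sup (sdot G s ` F)" by (simp add: J1_def F_def)
  define C where "C = {q :: 'v \<Rightarrow> real. \<forall>v\<in>nodes G. \<bar>q v\<bar> \<le> b v}"
  have clC: "closure P \<subseteq> C"
    unfolding C_def by (rule closure_minimal) (use bnd closed_box in auto)
  obtain p where p: "p \<in> P" using Pne by auto
  have "(\<lambda>v. 0) \<in> F"
    using p closure_subset[of P] capnn
    by (auto simp: F_def UctlS_def cubeS_def cube_def balanced_def flow_def intro!: bexI[of _ p])
  then have Fne: "sdot G s ` F \<noteq> {}" by auto
  have bdd: "bdd_above (sdot G s ` F)"
  proof (rule bdd_aboveI)
    fix x assume "x \<in> sdot G s ` F"
    then obtain u where u: "u \<in> F" and x: "x = sdot G s u" by auto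
    then obtain q where q: "q \<in> closure P" "u \<in> cube G q"
      by (auto simp: F_def UctlS_def cubeS_def)
    have "s v * u v \<le> \<bar>s v\<bar> * b v" if v: "v \<in> nodes G" for v
    proof -
      have "\<bar>u v\<bar> \<le> b v" using cube_abs[OF q(2) v] q(1) clC v unfolding C_def by force
      then have "\<bar>s v\<bar> * \<bar>u v\<bar> \<le> \<bar>s v\<bar> * b v" by (intro mult_left_mono) auto
      moreover have "s v * u v \<le> \<bar>s v\<bar> * \<bar>u v\<bar>" by (simp add: abs_mult[symmetric])
      ultimately show ?thesis by linarith
    qed
    then show "x \<le> (\<Sum>v\<in>nodes G. \<bar>s v\<bar> * b v)" unfolding x sdot_def by (intro sum_mono) auto
  qed
  have "Sup (sdot G s ` F) - \<epsilon>/2 < Sup (sdot G s ` F)" using eps by simp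
  then obtain u where uF: "u \<in> F" and uS: "Sup (sdot G s ` F) - \<epsilon>/2 < sdot G s u"
    using less_cSup_iff[OF Fne bdd] by auto
  obtain q where q: "q \<in> closure P" "u \<in> cube G q" and ub: "u \<in> balanced G E"
    and uf: "\<forall>i\<in>E. \<bar>flow G E u i\<bar> \<le> cap G i"
    using uF by (auto simp: F_def UctlS_def cubeS_def)
  define d where "d = \<epsilon> / (2 * (\<bar>sdot G s u\<bar> + 1))"
  define l where "l = 1 - min d (1/2)"
  have dpos: "d > 0" using eps by (simp add: d_def add_pos_nonneg)
  have l: "0 < l" "l < 1" using dpos by (auto simp: l_def)
  have "(1 - l) * \<bar>sdot G s u\<bar> \<le> d * \<bar>sdot G s u\<bar>"
    by (intro mult_right_mono) (auto simp: l_def)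
  also have "\<dots> \<le> \<epsilon> / 2"
  proof -
    have "d * \<bar>sdot G s u\<bar> = (\<epsilon>/2) * (\<bar>sdot G s u\<bar> / (\<bar>sdot G s u\<bar> + 1))"
      by (simp add: d_def)
    also have "\<dots> \<le> (\<epsilon>/2) * 1" using eps by (intro mult_left_mono) auto
    finally show ?thesis by simp
  qed
  finally have close: "(1 - l) * \<bar>sdot G s u\<bar> \<le> \<epsilon> / 2" .
  define r where "r = (\<lambda>v. if q v = 0 then 1 else (1 - l) * \<bar>q v\<bar>)"
  define T where "T = {f :: 'v \<Rightarrow> real. \<forall>v\<in>nodes G. \<bar>f v - q v\<bar> < r v}"
  have "open T" unfolding T_def by (rule open_box[OF fin])
  moreover have "q \<in> T" using l by (auto simp: T_def r_def)
  ultimately have "P \<inter> T \<noteq> {}" using q(1) closure_iff_nhds_not_empty by blast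
  then obtain q' where q': "q' \<in> P" "q' \<in> T" by auto
  define w where "w = (\<lambda>k::nat. \<lambda>v. l * u v)"
  have wc: "w 0 \<in> cube G q'"
  proof -
    have "0 \<le> sgn' (q' v) * (l * u v) \<and> sgn' (q' v) * (l * u v) \<le> \<bar>q' v\<bar>" if v: "v \<in> nodes G" for v
      using coord_approx[of "q v" "u v" l "q' v"] q(2) v l q'(2)
      unfolding cube_def T_def r_def by auto
    then show ?thesis by (auto simp: cube_def w_def)
  qed
  have wb: "w 0 \<in> balanced G E" unfolding w_def by (rule balanced_scale[OF ub])
  have wf: "\<forall>i\<in>E. \<bar>flow G E (w 0) i\<bar> \<le> cap G i"
  proof
    fix i assume i: "i \<in> E"
    have "\<bar>flow G E (w 0) i\<bar> = l * \<bar>flow G E u i\<bar>"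
      using l by (simp add: w_def flow_scale abs_mult)
    also have "\<dots> \<le> \<bar>flow G E u i\<bar>" using l mult_right_mono[of l 1 "\<bar>flow G E u i\<bar>"] by simp
    also have "\<dots> \<le> cap G i" using uf i by auto
    finally show "\<bar>flow G E (w 0) i\<bar> \<le> cap G i" .
  qed
  have wD: "w \<in> Dctl G E q' (Suc 0)"
    using wc wb wf by (auto simp: Dctl_def Uctl_def feasible_def)
  have "w 0 \<in> F"
    using wc wb wf q'(1) closure_subset[of P]
    by (auto simp: F_def UctlS_def cubeS_def)
  then have up: "sdot G s (w 0) \<le> Sup (sdot G s ` F)"
    by (intro cSup_upper bdd) auto
  have "sdot G s (w 0) = l * sdot G s u" by (simp add: w_def sdot_scale)
  also have "\<dots> = sdot G s u - (1 - l) * sdot G s u" by (simp add: algebra_simps)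
  finally have "sdot G s (w 0) \<ge> sdot G s u - \<epsilon>/2"
    using close abs_ge_self[of "sdot G s u"] l
    by (smt (verit) mult_left_mono)
  with uS up show ?thesis using wD q'(1) unfolding JJeq by force
qed


lemma UB_restrict: "UB G E P \<beta> = UB G E P (restrict \<beta> E)"
  unfolding UB_def by auto

lemma UU_finite: "finite E \<Longrightarrow> finite (UU G E P)"
proof -
  assume fE: "finite E"
  have "UU G E P \<subseteq> UB G E P ` (PiE E (\<lambda>_. {-1, 0, 1}))"
  proof
    fix U assume "U \<in> UU G E P"
    then obtain \<beta> where b: "\<forall>i\<in>E. \<beta> i \<in> {-1, 0, 1}" "U = UB G E P \<beta>" by (auto simp: UU_def)
    then have "restrict \<beta> E \<in> PiE E (\<lambda>_. {-1, 0, 1})" by auto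
    moreover have "U = UB G E P (restrict \<beta> E)" using b UB_restrict by metis
    ultimately show "U \<in> UB G E P ` (PiE E (\<lambda>_. {-1, 0, 1}))" by blast
  qed
  moreover have "finite (PiE E (\<lambda>_. {-1 :: int, 0, 1}))" using fE by (intro finite_PiE) auto
  ultimately show ?thesis by (meson finite_imageI finite_subset)
qed

lemma UU_ne: "P \<noteq> {} \<Longrightarrow> UU G E P \<noteq> {}"
proof -
  assume "P \<noteq> {}"
  then obtain p where p: "p \<in> P" by auto
  define u :: "'a \<Rightarrow> real" where "u = (\<lambda>v. 0)"
  have uU: "u \<in> UctlS G E P" using p
    by (auto simp: u_def UctlS_def cubeS_def cube_def balanced_def intro!: bexI[of _ p])
  define \<beta> :: "'b \<Rightarrow> int" where "\<beta> = (\<lambda>i. if flow G E u i < - cap G i then -1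
      else if flow G E u i > cap G i then 1 else 0)"
  have "u \<in> UB G E P \<beta>" using uU by (auto simp: UB_def \<beta>_def)
  moreover have "\<forall>i\<in>E. \<beta> i \<in> {-1, 0, 1}" by (auto simp: \<beta>_def)
  ultimately have "UB G E P \<beta> \<in> UU G E P" unfolding UU_def by blast
  then show ?thesis by auto
qed

lemma FE_cell:
  assumes "U = UB G E P \<beta>" "\<forall>i\<in>E. \<beta> i \<in> {-1, 0, 1}" "q \<in> U"
  shows "FE G E q = FEU G E U"
proof
  show "FEU G E U \<subseteq> FE G E q" using assms(3) by (auto simp: FE_def FEU_def)
next
  show "FE G E q \<subseteq> FEU G E U"
  proof
    fix i assume i: "i \<in> FE G E q"
    then have iE: "i \<in> E" and fq: "\<bar>flow G E q i\<bar> \<le> cap G i" by (auto simp: FE_def)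
    have "\<beta> i = 0"
    proof -
      have "\<beta> i \<noteq> -1" using assms(1,3) iE fq by (auto simp: UB_def)
      moreover have "\<beta> i \<noteq> 1" using assms(1,3) iE fq by (auto simp: UB_def)
      ultimately show ?thesis using assms(2) iE by auto
    qed
    then show "i \<in> FEU G E U" using assms(1) iE by (auto simp: FEU_def UB_def)
  qed
qed

lemma main:
  fixes G :: "('v, 'e) net"
  assumes fin: "finite (nodes G)" and eps: "\<epsilon> > 0"
    and capnn: "\<forall>i\<in>E0. cap G i \<ge> 0"
  shows "finite E \<Longrightarrow> E \<subseteq> E0 \<Longrightarrow> P \<noteq> {} \<Longrightarrow> \<forall>q\<in>P. \<forall>v\<in>nodes G. \<bar>q v\<bar> \<le> b v \<Longrightarrow>
    \<exists>q\<in>P. \<exists>w\<in>Dctl G E q (Suc t). JJ G s (Suc t) E P \<ge> sdot G s (w t) \<and>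
           sdot G s (w t) \<ge> JJ G s (Suc t) E P - \<epsilon>"
proof (induction t arbitrary: E P)
  case 0
  then show ?case using base[OF fin _ _ eps, of P b E s] capnn by auto
next
  case (Suc t)
  let ?f = "\<lambda>U. JJ G s (Suc t) (FEU G E U) U"
  have "JJ G s (Suc (Suc t)) E P = Max (?f ` UU G E P)" by simp
  moreover have "Max (?f ` UU G E P) \<in> ?f ` UU G E P"
    using UU_finite[OF Suc.prems(1)] UU_ne[OF Suc.prems(3)] by (intro Max_in) auto
  ultimately obtain U where UU: "U \<in> UU G E P" and JJeq: "JJ G s (Suc (Suc t)) E P = ?f U" by auto
  then obtain \<beta> where b: "U = UB G E P \<beta>" "\<forall>i\<in>E. \<beta> i \<in> {-1, 0, 1}" "U \<noteq> {}"
    by (auto simp: UU_def)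
  have Ubnd: "\<forall>q\<in>U. \<forall>v\<in>nodes G. \<bar>q v\<bar> \<le> b v"
  proof (intro ballI)
    fix u v assume u: "u \<in> U" and v: "v \<in> nodes G"
    then obtain q where "q \<in> P" "u \<in> cube G q" using b(1) by (auto simp: UB_def UctlS_def cubeS_def)
    then show "\<bar>u v\<bar> \<le> b v" using cube_abs[of u G q v] v Suc.prems(4) by force
  qed
  have fE: "finite (FEU G E U)" "FEU G E U \<subseteq> E0"
    using Suc.prems(1,2) by (auto simp: FEU_def intro: finite_subset)
  obtain q' w' where q': "q' \<in> U" and w': "w' \<in> Dctl G (FEU G E U) q' (Suc t)"
    and w'b: "JJ G s (Suc t) (FEU G E U) U \<ge> sdot G s (w' t)"
      "sdot G s (w' t) \<ge> JJ G s (Suc t) (FEU G E U) U - \<epsilon>"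
    using Suc.IH[OF fE b(3) Ubnd] by blast
  obtain q where q: "q \<in> P" "q' \<in> cube G q" "q' \<in> balanced G E"
    using q' b(1) by (auto simp: UB_def UctlS_def cubeS_def)
  have FEq: "FE G E q' = FEU G E U" using FE_cell[OF b(1,2) q'] .
  define w where "w = (\<lambda>k. if k = 0 then q' else w' (k - 1))"
  have w0: "w 0 = q'" and ws: "(\<lambda>j. w (Suc j)) = w'" by (auto simp: w_def)
  have cs: "casc G E q w (Suc k) = casc G (FEU G E U) q' w' k" for k
    using casc_shift[of G E q w k] w0 ws FEq by simp
  have "w \<in> Dctl G E q (Suc (Suc t))"
    unfolding Dctl_def
  proof (intro CollectI conjI allI impI)
    fix k assume k: "k < Suc (Suc t)"
    show "w k \<in> Uctl G (fst (casc G E q w k)) (snd (casc G E q w k))"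
    proof (cases k)
      case 0
      then show ?thesis using q w0 by (simp add: Uctl_def)
    next
      case (Suc k')
      then have "k' < Suc t" using k by simp
      then have "w' k' \<in> Uctl G (fst (casc G (FEU G E U) q' w' k')) (snd (casc G (FEU G E U) q' w' k'))"
        using w' by (auto simp: Dctl_def)
      then show ?thesis using Suc cs[of k'] ws by (metis)
    qed
  next
    have "feasible G (fst (casc G (FEU G E U) q' w' t)) (w' t)" using w' by (auto simp: Dctl_def)
    then show "feasible G (fst (casc G E q w (Suc (Suc t) - 1))) (w (Suc (Suc t) - 1))"
      using cs[of t] ws by (metis diff_Suc_1)
  qed
  moreover have "w (Suc t) = w' t" by (simp add: w_def)
  ultimately show ?case using q(1) w'b JJeq by metis
qed

theorem proposition4:
  fixes G :: "('v, 'e) net" and E0 :: "'e set" and p0 :: "'v \<Rightarrow> real"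
    and s :: "'v \<Rightarrow> real" and N :: nat and \<epsilon> :: real
  assumes "finite (nodes G)" and "finite E0"
    and "\<forall>i\<in>E0. tail G i \<in> nodes G \<and> head G i \<in> nodes G"
    and "\<forall>i\<in>E0. weight G i \<ge> 0" and "\<forall>i\<in>E0. cap G i \<ge> 0"
    and "\<forall>v\<in>nodes G. s v \<in> {-1, 0, 1}"
    and "p0 \<in> balanced G E0"
    and "N \<ge> 1"
    and "\<epsilon> > 0"
  shows "\<exists>u \<in> Dctl G E0 p0 N.
           JJ G s N E0 {p0} \<ge> sdot G s (u (N - 1)) \<and>
           sdot G s (u (N - 1)) \<ge> JJ G s N E0 {p0} - \<epsilon>"
proof -
  obtain t where N: "N = Suc t" using assms(8) by (cases N) auto
  have "\<exists>q\<in>{p0}. \<exists>w\<in>Dctl G E0 q (Suc t). JJ G s (Suc t) E0 {p0} \<ge> sdot G s (w t) \<and>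
           sdot G s (w t) \<ge> JJ G s (Suc t) E0 {p0} - \<epsilon>"
    by (rule main[OF assms(1) assms(9) assms(5), of E0 "{p0}" "\<lambda>v. \<bar>p0 v\<bar>"]) (use assms(2) in auto)
  then show ?thesis using N by auto
qed

end
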